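(* Let $u\in\mathbb{S}^{d-1}$, $\theta>0$, $0<\tilde c,\zeta<1$, and $b=\frac{\tilde c\zeta\theta}{\sqrt d}\le 1$. Let $w_t\in\mathbb{S}^{d-1}$ with $\theta_t:=\theta(w_t,u)\le\frac53\theta$, and let $(x_t,y_t)\in\mathbb{S}^{d-1}\times\{-1,+1\}$ be any labeled example with $w_t\cdot x_t\in[\frac b2,b]$ (e.g. drawn from $D$ conditioned on this event). Define $w_{t+1}=w_t-2\,\mathbb{1}\{y_t\,w_t\cdot x_t<0\}(w_t\cdot x_t)x_t$ and $\theta_{t+1}=\theta(w_{t+1},u)$. Then $|\cos\theta_{t+1}-\cos\theta_t|\le\frac{16\tilde c\zeta\theta^2}{3\sqrt d}$.
   Context: $\mathbb{S}^{d-1}$ is the unit sphere in $\mathbb{R}^d$; $\theta(v_1,v_2)=\arccos(v_1\cdot v_2)$ for unit vectors. (The update preserves unit norm.) *)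

theory Defs
  imports "HOL-Analysis.Analysis"
begin

definition ang :: "'a::euclidean_space \<Rightarrow> 'a \<Rightarrow> real" where
  "ang v1 v2 = arccos (v1 \<bullet> v2)"

definition upd :: "'a::euclidean_space \<Rightarrow> 'a \<Rightarrow> real \<Rightarrow> 'a" where
  "upd w x y = w - (2 * (if y * (w \<bullet> x) < 0 then 1 else 0) * (w \<bullet> x)) *\<^sub>R x"

end

theory Submission
  imports Defs
begin

lemma cos_lb: "1 - cos (t::real) \<le> t^2 / 2"
proof -
  have "cos t = cos (2 * (t/2))" by simp
  also have "\<dots> = 1 - 2 * (sin (t/2))^2" by (rule cos_double_sin)
  finally have e: "1 - cos t = 2 * (sin (t/2))^2" by simp
  have "\<bar>sin (t/2)\<bar> \<le> \<bar>t/2\<bar>" by (rule abs_sin_x_le_abs_x)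
  hence "(sin (t/2))^2 \<le> (t/2)^2"
    by (metis abs_ge_zero power2_abs power_mono)
  thus ?thesis using e by (simp add: power_divide)
qed

theorem lemma6:
  fixes u w x :: "'a::euclidean_space" and y \<theta> c \<zeta> b :: real
  assumes "norm u = 1"
    and "\<theta> > 0" and "0 < c" and "c < 1" and "0 < \<zeta>" and "\<zeta> < 1"
    and "b = c * \<zeta> * \<theta> / sqrt (real DIM('a))" and "b \<le> 1"
    and "norm w = 1" and "ang w u \<le> 5 / 3 * \<theta>"
    and "norm x = 1" and "y \<in> {-1, 1}"
    and "b / 2 \<le> w \<bullet> x" and "w \<bullet> x \<le> b"
  shows "\<bar>cos (ang (upd w x y) u) - cos (ang w u)\<bar>
           \<le> 16 * c * \<zeta> * \<theta>^2 / (3 * sqrt (real DIM('a)))"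
proof -
  define a where "a = w \<bullet> u"
  define \<alpha> where "\<alpha> = ang w u"
  have ab: "\<bar>a\<bar> \<le> 1" unfolding a_def using Cauchy_Schwarz_ineq2[of w u] assms(1,9) by simp
  hence ca: "cos \<alpha> = a" unfolding \<alpha>_def ang_def a_def[symmetric] by simp
  have a0: "\<alpha> \<ge> 0" unfolding \<alpha>_def ang_def using ab by (simp add: a_def arccos_lbound)
  have "(norm (w - u))^2 = 2 - 2 * a"
  proof -
    have "(norm (w - u))^2 = (w - u) \<bullet> (w - u)" by (rule power2_norm_eq_inner)
    also have "\<dots> = w \<bullet> w - 2 * (w \<bullet> u) + u \<bullet> u"
      by (simp add: inner_diff_left inner_diff_right inner_commute)
    finally show ?thesis unfolding a_def using assms(1,9) by (simp add: dot_square_norm)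
  qed
  also have "\<dots> \<le> \<alpha>^2" using cos_lb[of \<alpha>] ca by simp
  finally have "norm (w - u) \<le> \<alpha>" using a0 by (meson norm_ge_zero power2_le_imp_le)
  hence nwu: "norm (w - u) \<le> 5/3 * \<theta>" using assms(10) \<alpha>_def by simp
  have dpos: "sqrt (real DIM('a)) \<ge> 1" using DIM_positive[where 'a='a] by simp
  have b0: "b > 0" using assms(2,3,5,7) dpos by simp
  have "b \<le> c * \<zeta> * \<theta>" using assms(7) dpos assms(2,3,5)
  proof -
    have "c * \<zeta> * \<theta> > 0" using assms(2,3,5) by simp
    thus ?thesis using assms(7) dpos by (simp add: divide_le_eq mult_le_cancel_left1)
  qed
  also have "\<dots> \<le> \<theta>"
  proof -
    have "c * \<zeta> \<le> 1" using assms(3,4,5,6) by (simp add: mult_le_one)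
    thus ?thesis using assms(2) by (simp add: mult_le_cancel_right1 )
  qed
  finally have bt: "b \<le> \<theta>" .
  have "x \<bullet> u = x \<bullet> w - x \<bullet> (w - u)" by (simp add: inner_diff_right)
  moreover have "\<bar>x \<bullet> (w - u)\<bar> \<le> norm (w - u)"
    using Cauchy_Schwarz_ineq2[of x "w-u"] assms(11) by simp
  ultimately have xu: "\<bar>x \<bullet> u\<bar> \<le> b + 5/3*\<theta>"
    using nwu assms(13,14) b0 by (simp add: inner_commute)
  define k where "k = 2 * (if y * (w \<bullet> x) < 0 then 1 else 0) * (w \<bullet> x)"
  have k0: "0 \<le> k" "k \<le> 2 * b" using assms(13,14) b0 unfolding k_def by auto
  have kk: "k * k = 2 * k * (w \<bullet> x)" unfolding k_def by simp
  have up: "upd w x y = w - k *\<^sub>R x" unfolding upd_def k_def by simp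
  have "(w - k *\<^sub>R x) \<bullet> (w - k *\<^sub>R x) = w \<bullet> w - 2 * k * (w \<bullet> x) + k * k * (x \<bullet> x)"
    by (simp add: inner_diff_left inner_diff_right inner_commute algebra_simps)
  also have "\<dots> = 1" using assms(9,11) kk by (simp add: dot_square_norm)
  finally have "(w - k *\<^sub>R x) \<bullet> (w - k *\<^sub>R x) = 1" .
  hence nw: "norm (w - k *\<^sub>R x) = 1" by (simp add: norm_eq_sqrt_inner)
  have "\<bar>(w - k *\<^sub>R x) \<bullet> u\<bar> \<le> 1"
    using Cauchy_Schwarz_ineq2[of "w - k *\<^sub>R x" u] nw assms(1) by simp
  hence c2: "cos (ang (upd w x y) u) = a - k * (x \<bullet> u)"
    unfolding up ang_def a_def by (simp add: inner_diff_left)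
  have "\<bar>cos (ang (upd w x y) u) - cos (ang w u)\<bar> = k * \<bar>x \<bullet> u\<bar>"
    using c2 ca k0 \<alpha>_def by (simp add: abs_mult)
  also have "\<dots> \<le> 2 * b * (b + 5/3*\<theta>)"
    using k0 xu by (meson abs_ge_zero mult_mono order_trans b0 less_imp_le)
  also have "\<dots> \<le> 2 * b * (8/3*\<theta>)" using bt b0 by simp
  also have "\<dots> = 16 * c * \<zeta> * \<theta>^2 / (3 * sqrt (real DIM('a)))"
    using assms(7) by (simp add: power2_eq_square)
  finally show ?thesis .
qed

end
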